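(* Let $\langle \mathscr{A} \mid \mathscr{R} \rangle$ be a monoid presentation satisfying $C(2)$, and let $a \in \mathscr{A}$. Then $a$ is either indecomposable or redundant.
   Context: A monoid presentation $\langle \mathscr{A} \mid \mathscr{R} \rangle$ consists of an alphabet $\mathscr{A}$ and a set $\mathscr{R} \subseteq \mathscr{A}^* \times \mathscr{A}^*$ of relations; $\equiv_\mathscr{R}$ is the smallest congruence on $\mathscr{A}^*$ containing $\mathscr{R}$, $[u]$ denotes the class of $u$, and the monoid presented is $\mathscr{A}^*/\equiv_\mathscr{R}$. A relation word is a word occurring as one side of a relation in $\mathscr{R}$. A piece is a word which occurs as a factor of two distinct relation words, or in two different (possibly overlapping) positions within one relation word; the empty word is always a piece. The presentation is $C(n)$ ($n$ a positive integer) if no relation word can be written as a product of strictly fewer than $n$ pieces. A generator $a \in \mathscr{A}$ is redundant if $a$ is $\equiv_\mathscr{R}$-equivalent to a product of zero or more generators other than $a$ (equivalently, the monoid presented is generated by the classes of the letters in $\mathscr{A} \setminus \{a\}$). A non-identity element $s$ of a monoid is indecomposable if whenever $xy = s$ we have $x = 1$ or $y = 1$; a generator $a$ is indecomposable if $[a]$ is indecomposable. *)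

theory Defs
  imports Main
begin

inductive pres_cong :: "('a list \<times> 'a list) set \<Rightarrow> 'a list \<Rightarrow> 'a list \<Rightarrow> bool"
  for R :: "('a list \<times> 'a list) set" where
  rel: "(l, r) \<in> R \<Longrightarrow> pres_cong R l r"
| refl: "pres_cong R u u"
| sym: "pres_cong R u v \<Longrightarrow> pres_cong R v u"
| trans: "pres_cong R u v \<Longrightarrow> pres_cong R v w \<Longrightarrow> pres_cong R u w"
| mult: "pres_cong R u v \<Longrightarrow> pres_cong R (x @ u @ y) (x @ v @ y)"

definition relation_words :: "('a list \<times> 'a list) set \<Rightarrow> 'a list set" where
  "relation_words R = fst ` R \<union> snd ` R"

definition is_factor_at :: "'a list \<Rightarrow> 'a list \<Rightarrow> nat \<Rightarrow> bool" where
  "is_factor_at p w i \<longleftrightarrow> (\<exists>x y. w = x @ p @ y \<and> length x = i)"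

definition is_piece :: "('a list \<times> 'a list) set \<Rightarrow> 'a list \<Rightarrow> bool" where
  "is_piece R p \<longleftrightarrow>
     p = [] \<or>
     (\<exists>w1 \<in> relation_words R. \<exists>w2 \<in> relation_words R. w1 \<noteq> w2 \<and>
         (\<exists>i. is_factor_at p w1 i) \<and> (\<exists>j. is_factor_at p w2 j)) \<or>
     (\<exists>w \<in> relation_words R. \<exists>i j. i \<noteq> j \<and> is_factor_at p w i \<and> is_factor_at p w j)"

definition C_cond :: "nat \<Rightarrow> ('a list \<times> 'a list) set \<Rightarrow> bool" where
  "C_cond n R \<longleftrightarrow>
     (\<forall>w \<in> relation_words R. \<not> (\<exists>ps. length ps < n \<and> (\<forall>p \<in> set ps. is_piece R p) \<and> concat ps = w))"

definition redundant_gen :: "'a set \<Rightarrow> ('a list \<times> 'a list) set \<Rightarrow> 'a \<Rightarrow> bool" where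
  "redundant_gen A R a \<longleftrightarrow> (\<exists>w \<in> lists (A - {a}). pres_cong R [a] w)"

definition indecomposable_gen :: "'a set \<Rightarrow> ('a list \<times> 'a list) set \<Rightarrow> 'a \<Rightarrow> bool" where
  "indecomposable_gen A R a \<longleftrightarrow>
     \<not> pres_cong R [a] [] \<and>
     (\<forall>x \<in> lists A. \<forall>y \<in> lists A. pres_cong R (x @ y) [a] \<longrightarrow>
         pres_cong R x [] \<or> pres_cong R y [])"

end

theory Submission
  imports Defs
begin

lemma rw_nonempty:
  assumes "C_cond 2 R" "w \<in> relation_words R" shows "w \<noteq> []"
proof
  assume "w = []"
  hence "length ([]::'a list list) < 2 \<and> (\<forall>p \<in> set ([]::'a list list). is_piece R p) \<and> concat [] = w" by simp
  thus False using assms unfolding C_cond_def by blast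
qed

lemma red_case:
  assumes sub: "R \<subseteq> lists A \<times> lists A" and C: "C_cond 2 R"
    and lw: "[a] \<in> relation_words R" and rw: "r \<in> relation_words R" and ne: "r \<noteq> [a]"
    and pc: "pres_cong R [a] r"
    and rA: "r \<in> lists A"
  shows "redundant_gen A R a"
proof -
  have "a \<notin> set r"
  proof
    assume "a \<in> set r"
    then obtain x y where "r = x @ [a] @ y" by (metis append_Cons append_Nil split_list)
    hence f1: "is_factor_at [a] r (length x)" unfolding is_factor_at_def by blast
    have f2: "is_factor_at [a] [a] 0" unfolding is_factor_at_def by auto
    have "is_piece R [a]" unfolding is_piece_def using lw rw ne f1 f2 by blast
    hence "length [[a]] < 2 \<and> (\<forall>p \<in> set [[a]]. is_piece R p) \<and> concat [[a]] = [a]" by simp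
    thus False using C lw unfolding C_cond_def by blast
  qed
  hence "r \<in> lists (A - {a})" using rA by auto
  thus ?thesis unfolding redundant_gen_def using pc by blast
qed

lemma inv:
  assumes "pres_cong R u v"
    and nonempty: "\<And>l r. (l, r) \<in> R \<Longrightarrow> l \<noteq> [] \<and> r \<noteq> []"
    and noa: "\<And>l r. (l, r) \<in> R \<Longrightarrow> (l = [a] \<longleftrightarrow> r = [a])"
  shows "(u = [] \<longleftrightarrow> v = []) \<and> (u = [a] \<longleftrightarrow> v = [a])"
  using assms(1)
proof (induction rule: pres_cong.induct)
  case (rel l r) thus ?case using nonempty noa by blast
next
  case (mult u v x y)
  show ?case
  proof (intro conjI)
    show "(x @ u @ y = []) = (x @ v @ y = [])" using mult by auto
    show "(x @ u @ y = [a]) = (x @ v @ y = [a])"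
      using mult by (cases x; cases y; cases u; cases v; auto)
  qed
qed auto

theorem proposition5:
  fixes A :: "'a set" and R :: "('a list \<times> 'a list) set" and a :: 'a
  assumes "R \<subseteq> lists A \<times> lists A"
    and "C_cond 2 R"
    and "a \<in> A"
  shows "indecomposable_gen A R a \<or> redundant_gen A R a"
proof (cases "\<exists>l r. (l, r) \<in> R \<and> \<not> (l = [a] \<longleftrightarrow> r = [a])")
  case True
  then obtain l r where lr: "(l, r) \<in> R" "\<not> (l = [a] \<longleftrightarrow> r = [a])" by blast
  have wl: "l \<in> relation_words R" unfolding relation_words_def using lr(1) by (metis UnI1 fst_conv image_eqI)
  have wr: "r \<in> relation_words R" unfolding relation_words_def using lr(1) by (metis UnI2 snd_conv image_eqI)
  have A: "l \<in> lists A" "r \<in> lists A" using lr(1) assms(1) by auto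
  have pc: "pres_cong R l r" using lr(1) by (rule pres_cong.rel)
  show ?thesis
  proof (cases "l = [a]")
    case True
    hence "r \<noteq> [a]" using lr(2) by blast
    have "pres_cong R [a] r" using pc True by simp
    show ?thesis
      by (rule disjI2, rule red_case[OF assms(1,2)]) (use True wl wr \<open>r \<noteq> [a]\<close> \<open>pres_cong R [a] r\<close> A in auto)
  next
    case False
    hence ra: "r = [a]" using lr(2) by blast
    have "pres_cong R [a] l" using pc ra by (simp add: pres_cong.sym)
    show ?thesis
      by (rule disjI2, rule red_case[OF assms(1,2)]) (use False wl wr ra \<open>pres_cong R [a] l\<close> A in auto)
  qed
next
  case False
  have noa: "\<And>l r. (l, r) \<in> R \<Longrightarrow> (l = [a] \<longleftrightarrow> r = [a])" using False by blast
  have ne: "\<And>l r. (l, r) \<in> R \<Longrightarrow> l \<noteq> [] \<and> r \<noteq> []"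
  proof -
    fix l r assume "(l, r) \<in> R"
    hence "l \<in> relation_words R" "r \<in> relation_words R" unfolding relation_words_def
      by (metis UnI1 fst_conv image_eqI) (metis UnI2 snd_conv image_eqI \<open>(l, r) \<in> R\<close>)
    thus "l \<noteq> [] \<and> r \<noteq> []" using rw_nonempty[OF assms(2)] by blast
  qed
  have I: "\<And>u v. pres_cong R u v \<Longrightarrow> (u = [] \<longleftrightarrow> v = []) \<and> (u = [a] \<longleftrightarrow> v = [a])"
    by (rule inv[OF _ ne noa])
  have "indecomposable_gen A R a"
    unfolding indecomposable_gen_def
  proof (intro conjI ballI impI)
    show "\<not> pres_cong R [a] []" using I by blast
  next
    fix x y assume "pres_cong R (x @ y) [a]"
    hence "x @ y = [a]" using I by blast
    hence "x = [] \<or> y = []" by (cases x) auto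
    thus "pres_cong R x [] \<or> pres_cong R y []" using pres_cong.refl by auto
  qed
  thus ?thesis by blast
qed

end
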